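(* Consider the problem and the UCGS iterates described in the context, and suppose the parameters satisfy $\beta_k\ge L_k\gamma_k$ for all $k$. Then for every $k\ge1$ and every $x\in X$, $$f(y_k)-\ell_k(x)\le\frac{\varepsilon}{2}+\Gamma_k\sum_{i=1}^k\frac{\gamma_i\beta_i}{2\Gamma_i}\big(\|x-x_{i-1}\|^2-\|x-x_i\|^2\big)+\Gamma_k\sum_{i=1}^k\frac{\gamma_i\eta_i}{\Gamma_i},$$ where $\ell_k(x):=\Gamma_k\sum_{i=1}^k\frac{\gamma_i}{\Gamma_i}\big(f(z_i)+\langle\nabla f(z_i),x-z_i\rangle\big)$.
   Context: Problem: $\min_{x\in X}f(x)$, where $X\subset\mathbb{R}^n$ is nonempty, compact, convex (Euclidean norm), and $f$ is convex and differentiable. ACGM procedure with input $(g,u,\beta,\eta)$, $u\in X$: with $\phi(x)=\langle g,x\rangle+\frac\beta2\|x-u\|^2$, set $u^0=u$; for $t=1,2,\dots$ compute $v^t\in X$ with $\langle\nabla\phi(u^{t-1}),v^t-x\rangle\le\delta^t$ for all $x\in X$; if $\langle\nabla\phi(u^{t-1}),u^{t-1}-v^t\rangle\le\eta-\delta^t$ output $u^{t-1}$, else $u^t=(1-\alpha^t)u^{t-1}+\alpha^tv^t$, $\alpha^t\in[0,1]$. UCGS iterates with accuracy $\varepsilon>0$, start $x_0\in X$, $y_0:=x_0$, positive parameters $\beta_k,\eta_k$: at outer iteration $k=1,2,\dots$, with the accepted value $L_k>0$, $\gamma_1=1$ and, for $k\ge2$, $\gamma_k\in(0,1]$ solves $L_k\gamma_k^2/k=\Gamma_{k-1}(1-\gamma_k)$;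 $\Gamma_k:=L_k\gamma_k^2/k$ (so $\Gamma_k=(1-\gamma_k)\Gamma_{k-1}$ for $k\ge2$); $z_k=(1-\gamma_k)y_{k-1}+\gamma_kx_{k-1}$; $x_k:=$ output of ACGM with $g=\nabla f(z_k)$, $u=x_{k-1}$, $\beta=\beta_k$, $\eta=\eta_k$; $y_k=(1-\gamma_k)y_{k-1}+\gamma_kx_k$; and $L_k$ is such that $f(y_k)\le f(z_k)+\langle\nabla f(z_k),y_k-z_k\rangle+\frac{L_k}{2}\|y_k-z_k\|^2+\frac{\varepsilon}{2}\gamma_k$. *)

theory Defs
  imports "HOL-Analysis.Analysis"
begin

text \<open>Gradient of phi(x) = <g,x> + beta/2 ||x-u||^2.\<close>
definition acgm_grad :: "'a::euclidean_space \<Rightarrow> 'a \<Rightarrow> real \<Rightarrow> 'a \<Rightarrow> 'a" where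
  "acgm_grad g u \<beta> y = g + \<beta> *\<^sub>R (y - u)"

text \<open>w is a possible output of the ACGM procedure with input (g,u,beta,eta):
  there is a run u^0 = u, u^1, ..., with LMO points v^t, tolerances delta^t and step sizes
  alpha^t, which stops at iteration T (T \<ge> 1) and outputs w = u^(T-1).\<close>
definition acgm_output ::
  "'a::euclidean_space set \<Rightarrow> 'a \<Rightarrow> 'a \<Rightarrow> real \<Rightarrow> real \<Rightarrow> 'a \<Rightarrow> bool" where
  "acgm_output X g u \<beta> \<eta> w \<longleftrightarrow>
     (\<exists>(us :: nat \<Rightarrow> 'a) (vs :: nat \<Rightarrow> 'a) (\<delta> :: nat \<Rightarrow> real) (\<alpha> :: nat \<Rightarrow> real) (T :: nat).
        T \<ge> 1 \<and> us 0 = u \<and>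
        (\<forall>t\<in>{1..T}. vs t \<in> X \<and>
           (\<forall>x\<in>X. inner (acgm_grad g u \<beta> (us (t - 1))) (vs t - x) \<le> \<delta> t)) \<and>
        (\<forall>t\<in>{1..<T}.
           inner (acgm_grad g u \<beta> (us (t - 1))) (us (t - 1) - vs t) > \<eta> - \<delta> t \<and>
           0 \<le> \<alpha> t \<and> \<alpha> t \<le> 1 \<and>
           us t = (1 - \<alpha> t) *\<^sub>R us (t - 1) + \<alpha> t *\<^sub>R vs t) \<and>
        inner (acgm_grad g u \<beta> (us (T - 1))) (us (T - 1) - vs T) \<le> \<eta> - \<delta> T \<and>
        w = us (T - 1))"

end

theory Submission
  imports Defs
begin

lemma tangent:
  fixes f :: "'a::euclidean_space \<Rightarrow> real"
  assumes fconv: "convex_on UNIV f"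
    and fgrad: "\<And>w. (f has_derivative (\<lambda>h. inner (gradf w) h)) (at w)"
  shows "f y \<ge> f z + inner (gradf z) (y - z)"
proof -
  define h where "h t = f (z + t *\<^sub>R (y - z))" for t :: real
  have hc: "convex_on UNIV h"
  proof (rule convex_onI)
    fix t a b :: real assume "t > 0" "t < 1"
    have "h ((1 - t) *\<^sub>R a + t *\<^sub>R b) = f ((1 - t) *\<^sub>R (z + a *\<^sub>R (y - z)) + t *\<^sub>R (z + b *\<^sub>R (y - z)))"
      unfolding h_def by (rule arg_cong[where f=f]) (simp add: algebra_simps)
    also have "\<dots> \<le> (1 - t) * h a + t * h b"
      unfolding h_def using convex_onD[OF fconv, of t] \<open>t>0\<close> \<open>t<1\<close> by auto
    finally show "h ((1 - t) *\<^sub>R a + t *\<^sub>R b) \<le> (1 - t) * h a + t * h b" .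
  qed simp
  have d1: "((\<lambda>t. z + t *\<^sub>R (y - z)) has_derivative (\<lambda>t. t *\<^sub>R (y - z))) (at 0)"
    by (auto intro!: derivative_eq_intros)
  have d2: "(f has_derivative (\<lambda>v. inner (gradf z) v)) (at (z + 0 *\<^sub>R (y - z)))"
    using fgrad[of z] by simp
  have "(h has_derivative (\<lambda>t. inner (gradf z) (t *\<^sub>R (y - z)))) (at 0)"
    unfolding h_def using has_derivative_compose[OF d1 d2] by (simp add: o_def)
  hence "(h has_field_derivative inner (gradf z) (y - z)) (at 0)"
    unfolding has_field_derivative_def
    by (simp add: mult.commute[of _ "inner (gradf z) (y - z)"])
  hence "h 1 - h 0 \<ge> inner (gradf z) (y - z) * (1 - 0)"
    by (intro convex_on_imp_above_tangent[OF hc]) auto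
  thus ?thesis unfolding h_def by simp
qed

lemma acgm_prop:
  assumes A: "acgm_output X g u \<beta> \<eta> w" and u: "u \<in> X" and cX: "convex X"
  shows "w \<in> X \<and> (\<forall>x\<in>X. inner (acgm_grad g u \<beta> w) (w - x) \<le> \<eta>)"
proof -
  obtain us vs \<delta> \<alpha> T where T: "T \<ge> (1::nat)" "us 0 = u"
    and v: "\<forall>t\<in>{1..T}. vs t \<in> X \<and>
           (\<forall>x\<in>X. inner (acgm_grad g u \<beta> (us (t - 1))) (vs t - x) \<le> \<delta> t)"
    and st: "\<forall>t\<in>{1..<T}.
           inner (acgm_grad g u \<beta> (us (t - 1))) (us (t - 1) - vs t) > \<eta> - \<delta> t \<and>
           0 \<le> \<alpha> t \<and> \<alpha> t \<le> 1 \<and>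
           us t = (1 - \<alpha> t) *\<^sub>R us (t - 1) + \<alpha> t *\<^sub>R vs t"
    and fin: "inner (acgm_grad g u \<beta> (us (T - 1))) (us (T - 1) - vs T) \<le> \<eta> - \<delta> T"
    and w: "w = us (T - 1)"
    using A unfolding acgm_output_def by (elim exE conjE) (rule that; assumption)
  have "t < T \<Longrightarrow> us t \<in> X" for t
  proof (induction t)
    case 0 then show ?case using T u by simp
  next
    case (Suc t)
    have "Suc t \<in> {1..<T}" "Suc t \<in> {1..T}" using Suc by auto
    hence "us (Suc t) = (1 - \<alpha> (Suc t)) *\<^sub>R us t + \<alpha> (Suc t) *\<^sub>R vs (Suc t)"
      "0 \<le> \<alpha> (Suc t)" "\<alpha> (Suc t) \<le> 1" "vs (Suc t) \<in> X" using st v by auto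
    then show ?case using Suc convexD_alt[OF cX] by (metis Suc_lessD)
  qed
  hence wX: "w \<in> X" using w T by simp
  have "T \<in> {1..T}" using T by auto
  hence "\<forall>x\<in>X. inner (acgm_grad g u \<beta> w) (vs T - x) \<le> \<delta> T" using v w by auto
  hence "\<forall>x\<in>X. inner (acgm_grad g u \<beta> w) (w - x) \<le> \<eta>"
    using fin w by (smt (verit) inner_diff_right)
  thus ?thesis using wX by blast
qed

lemma three_point:
  fixes a b c :: "'a::real_inner"
  shows "2 * inner (a - b) (c - a) = (norm (c - b))\<^sup>2 - (norm (c - a))\<^sup>2 - (norm (a - b))\<^sup>2"
  by (simp add: power2_norm_eq_inner inner_diff_left inner_diff_right inner_commute algebra_simps)

theorem mainTheorem4:
  fixes X :: "'a::euclidean_space set"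
    and f :: "'a \<Rightarrow> real" and gradf :: "'a \<Rightarrow> 'a"
    and \<epsilon> :: real
    and x y z :: "nat \<Rightarrow> 'a"
    and L \<gamma> \<Gamma> \<beta> \<eta> :: "nat \<Rightarrow> real"
  assumes X: "X \<noteq> {}" "compact X" "convex X"
    and fconv: "convex_on UNIV f"
    and fgrad: "\<And>w. (f has_derivative (\<lambda>h. inner (gradf w) h)) (at w)"
    and eps: "\<epsilon> > 0"
    and x0: "x 0 \<in> X" and y0: "y 0 = x 0"
    and Lpos: "\<And>k. k \<ge> 1 \<Longrightarrow> L k > 0"
    and \<beta>pos: "\<And>k. k \<ge> 1 \<Longrightarrow> \<beta> k > 0"
    and \<eta>pos: "\<And>k. k \<ge> 1 \<Longrightarrow> \<eta> k > 0"
    and \<gamma>1: "\<gamma> 1 = 1"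
    and \<gamma>k: "\<And>k. k \<ge> 2 \<Longrightarrow> 0 < \<gamma> k \<and> \<gamma> k \<le> 1 \<and>
                L k * (\<gamma> k)\<^sup>2 / real k = \<Gamma> (k - 1) * (1 - \<gamma> k)"
    and \<Gamma>def: "\<And>k. k \<ge> 1 \<Longrightarrow> \<Gamma> k = L k * (\<gamma> k)\<^sup>2 / real k"
    and zdef: "\<And>k. k \<ge> 1 \<Longrightarrow> z k = (1 - \<gamma> k) *\<^sub>R y (k - 1) + \<gamma> k *\<^sub>R x (k - 1)"
    and xdef: "\<And>k. k \<ge> 1 \<Longrightarrow> acgm_output X (gradf (z k)) (x (k - 1)) (\<beta> k) (\<eta> k) (x k)"
    and ydef: "\<And>k. k \<ge> 1 \<Longrightarrow> y k = (1 - \<gamma> k) *\<^sub>R y (k - 1) + \<gamma> k *\<^sub>R x k"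
    and Lacc: "\<And>k. k \<ge> 1 \<Longrightarrow> f (y k) \<le> f (z k) + inner (gradf (z k)) (y k - z k)
                 + L k / 2 * (norm (y k - z k))\<^sup>2 + \<epsilon> / 2 * \<gamma> k"
    and \<beta>L: "\<And>k. k \<ge> 1 \<Longrightarrow> \<beta> k \<ge> L k * \<gamma> k"
  shows "\<forall>k\<ge>1. \<forall>u\<in>X.
     f (y k) - \<Gamma> k * (\<Sum>i=1..k. \<gamma> i / \<Gamma> i * (f (z i) + inner (gradf (z i)) (u - z i)))
     \<le> \<epsilon> / 2
        + \<Gamma> k * (\<Sum>i=1..k. \<gamma> i * \<beta> i / (2 * \<Gamma> i) * ((norm (u - x (i - 1)))\<^sup>2 - (norm (u - x i))\<^sup>2))
        + \<Gamma> k * (\<Sum>i=1..k. \<gamma> i * \<eta> i / \<Gamma> i)"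
proof -
  have xX: "x k \<in> X" for k
  proof (induction k)
    case 0 then show ?case using x0 by simp
  next
    case (Suc k)
    then show ?case using acgm_prop[OF xdef[of "Suc k"] _ X(3)] by simp
  qed
  have g01: "0 < \<gamma> k \<and> \<gamma> k \<le> 1" if "k \<ge> 1" for k
    using \<gamma>1 \<gamma>k[of k] that by (cases "k = 1") auto
  have \<Gamma>pos: "\<Gamma> k > 0" if "k \<ge> 1" for k
    using \<Gamma>def[OF that] Lpos[OF that] g01[OF that] that by simp
  have \<Gamma>rec: "\<Gamma> k = \<Gamma> (k - 1) * (1 - \<gamma> k)" if "k \<ge> 2" for k
    using \<Gamma>def[of k] \<gamma>k[OF that] that by simp
  define T where "T i u = f (z i) + inner (gradf (z i)) (u - z i) + \<eta> i
     + \<beta> i / 2 * ((norm (u - x (i - 1)))\<^sup>2 - (norm (u - x i))\<^sup>2)" for i u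
  have step: "f (y k) \<le> (1 - \<gamma> k) * f (y (k - 1)) + \<gamma> k * T k u + \<epsilon> / 2 * \<gamma> k"
    if k1: "k \<ge> 1" and u: "u \<in> X" for k u
  proof -
    define g where "g = gradf (z k)"
    define d where "d = x k - x (k - 1)"
    define a where "a = inner g (y (k - 1) - z k)"
    define b where "b = inner g (x k - u)"
    define c where "c = inner g (u - z k)"
    define p where "p = inner d (u - x k)"
    define N where "N = (norm d)\<^sup>2"
    define A where "A = (norm (u - x (k - 1)))\<^sup>2"
    define B where "B = (norm (u - x k))\<^sup>2"
    have h1: "y k - z k = \<gamma> k *\<^sub>R d"
      unfolding d_def ydef[OF k1] zdef[OF k1] by (simp add: algebra_simps)
    have h2: "y k - z k = (1 - \<gamma> k) *\<^sub>R (y (k - 1) - z k) + \<gamma> k *\<^sub>R ((x k - u) + (u - z k))"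
      unfolding ydef[OF k1] by (simp add: algebra_simps)
    have i1: "inner g (y k - z k) = (1 - \<gamma> k) * a + \<gamma> k * b + \<gamma> k * c"
      unfolding a_def b_def c_def h2 by (simp add: inner_add_right algebra_simps)
    have h3: "a \<le> f (y (k - 1)) - f (z k)"
      unfolding a_def g_def using tangent[OF fconv fgrad, of "z k" "y (k - 1)"] by simp
    have h4: "inner (acgm_grad g (x (k - 1)) (\<beta> k) (x k)) (x k - u) \<le> \<eta> k"
      using acgm_prop[OF xdef[OF k1] xX X(3)] u unfolding g_def by blast
    hence h4': "b - \<beta> k * p \<le> \<eta> k"
      unfolding acgm_grad_def b_def p_def d_def
      by (simp add: inner_add_left inner_diff_right algebra_simps)
    have h5: "2 * p = A - B - N"
      unfolding p_def A_def B_def N_def d_def using three_point[of "x k" "x (k - 1)" u] by simp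
    have h6: "(norm (y k - z k))\<^sup>2 = (\<gamma> k)\<^sup>2 * N"
      unfolding h1 N_def by (simp add: power_mult_distrib)
    have gk: "0 < \<gamma> k" "\<gamma> k \<le> 1" using g01[OF k1] by auto
    have h7: "(1 - \<gamma> k) * a \<le> (1 - \<gamma> k) * (f (y (k - 1)) - f (z k))"
      using h3 gk by (intro mult_left_mono) auto
    have h8: "\<gamma> k * (b - \<beta> k * p) \<le> \<gamma> k * \<eta> k"
      using h4' gk by (intro mult_left_mono) auto
    have N0: "N \<ge> 0" unfolding N_def by simp
    have h9: "(L k * \<gamma> k) * (\<gamma> k * N) \<le> \<beta> k * (\<gamma> k * N)"
      using \<beta>L[OF k1] gk N0 by (intro mult_right_mono) auto
    have La: "f (y k) \<le> f (z k) + ((1 - \<gamma> k) * a + \<gamma> k * b + \<gamma> k * c)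
                 + L k / 2 * ((\<gamma> k)\<^sup>2 * N) + \<epsilon> / 2 * \<gamma> k"
      using Lacc[OF k1] i1 h6 unfolding g_def by simp
    have TT: "T k u = f (z k) + c + \<eta> k + \<beta> k / 2 * (A - B)"
      unfolding T_def c_def g_def A_def B_def by simp
    have e1: "\<gamma> k * (b - \<beta> k * p) = \<gamma> k * b - \<gamma> k * \<beta> k * p" by (simp add: algebra_simps)
    have e2: "\<gamma> k * \<beta> k * p = \<gamma> k * \<beta> k / 2 * (A - B) - \<gamma> k * \<beta> k / 2 * N"
    proof -
      have p': "p = (A - B - N) / 2" using h5 by (simp add: field_simps)
      show ?thesis unfolding p' by (simp add: field_simps)
    qed
    have e3: "L k / 2 * ((\<gamma> k)\<^sup>2 * N) = (L k * \<gamma> k) * (\<gamma> k * N) / 2"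
      by (simp add: power2_eq_square)
    have e4: "\<gamma> k * T k u = \<gamma> k * f (z k) + \<gamma> k * c + \<gamma> k * \<eta> k + \<gamma> k * \<beta> k / 2 * (A - B)"
      unfolding TT by (simp add: algebra_simps)
    have e5: "\<beta> k * (\<gamma> k * N) = \<gamma> k * \<beta> k * N" by simp
    have e6: "(1 - \<gamma> k) * (f (y (k - 1)) - f (z k)) = (1 - \<gamma> k) * f (y (k - 1)) - f (z k) + \<gamma> k * f (z k)"
      by (simp add: algebra_simps)
    define W where "W = L k * \<gamma> k * (\<gamma> k * N)"
    define X1 where "X1 = \<gamma> k * \<beta> k / 2 * (A - B)"
    define X2 where "X2 = \<gamma> k * \<beta> k / 2 * N"
    define Pa where "Pa = (1 - \<gamma> k) * a"
    define Q where "Q = (1 - \<gamma> k) * f (y (k - 1))"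
    define Z where "Z = \<gamma> k * \<beta> k * p"
    have f1: "f (y k) \<le> f (z k) + Pa + \<gamma> k * b + \<gamma> k * c + W / 2 + \<epsilon> / 2 * \<gamma> k"
      using La e3 unfolding W_def Pa_def by linarith
    have f2: "Pa \<le> Q - f (z k) + \<gamma> k * f (z k)" using h7 e6 unfolding Pa_def Q_def by linarith
    have f3: "\<gamma> k * b - Z \<le> \<gamma> k * \<eta> k" using h8 e1 unfolding Z_def by linarith
    have f4: "Z = X1 - X2" using e2 unfolding Z_def X1_def X2_def .
    have f5: "W \<le> 2 * X2" using h9 e5 unfolding W_def X2_def by simp
    have f6: "(1 - \<gamma> k) * f (y (k - 1)) + \<gamma> k * T k u + \<epsilon> / 2 * \<gamma> k
       = Q + \<gamma> k * f (z k) + \<gamma> k * c + \<gamma> k * \<eta> k + X1 + \<epsilon> / 2 * \<gamma> k"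
      using e4 unfolding Q_def X1_def by simp
    show ?thesis unfolding f6 using f1 f2 f3 f4 f5 by linarith
  qed
  have ind: "f (y (Suc n)) \<le> \<Gamma> (Suc n) * (\<Sum>i=1..Suc n. \<gamma> i / \<Gamma> i * T i u) + \<epsilon> / 2"
    if u: "u \<in> X" for n u
  proof (induction n)
    case 0
    have "\<Gamma> 1 \<noteq> 0" using \<Gamma>pos[of 1] by simp
    then show ?case using step[of 1 u] u \<gamma>1 by simp
  next
    case (Suc n)
    define k where "k = Suc (Suc n)"
    define S where "S = (\<Sum>i=1..Suc n. \<gamma> i / \<Gamma> i * T i u)"
    have k1: "k \<ge> 1" "k \<ge> 2" "k - 1 = Suc n" unfolding k_def by auto
    have gk: "0 < \<gamma> k" "\<gamma> k \<le> 1" using g01[OF k1(1)] by auto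
    have Gk: "\<Gamma> k \<noteq> 0" using \<Gamma>pos[OF k1(1)] by simp
    have rec: "\<Gamma> k = \<Gamma> (Suc n) * (1 - \<gamma> k)" using \<Gamma>rec[OF k1(2)] k1(3) by simp
    have sumk: "(\<Sum>i=1..k. \<gamma> i / \<Gamma> i * T i u) = S + \<gamma> k / \<Gamma> k * T k u"
      unfolding S_def k_def by (simp add: sum.cl_ivl_Suc)
    have "f (y k) \<le> (1 - \<gamma> k) * f (y (Suc n)) + \<gamma> k * T k u + \<epsilon> / 2 * \<gamma> k"
      using step[OF k1(1) u] k1(3) by simp
    also have "\<dots> \<le> (1 - \<gamma> k) * (\<Gamma> (Suc n) * S + \<epsilon> / 2) + \<gamma> k * T k u + \<epsilon> / 2 * \<gamma> k"
      using Suc.IH gk unfolding S_def by (intro add_right_mono mult_left_mono) auto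
    also have "\<dots> = \<Gamma> k * S + \<gamma> k * T k u + \<epsilon> / 2"
      unfolding rec by (simp add: field_simps)
    also have "\<dots> = \<Gamma> k * (S + \<gamma> k / \<Gamma> k * T k u) + \<epsilon> / 2"
      using Gk by (simp add: distrib_left)
    finally show ?case using sumk unfolding k_def by simp
  qed
  show ?thesis
  proof (intro allI impI ballI)
    fix k :: nat and u assume k1: "k \<ge> 1" and u: "u \<in> X"
    obtain n where n: "k = Suc n" using k1 by (cases k) auto
    have "(\<Sum>i=1..k. \<gamma> i / \<Gamma> i * T i u) =
      (\<Sum>i=1..k. \<gamma> i / \<Gamma> i * (f (z i) + inner (gradf (z i)) (u - z i))
        + \<gamma> i * \<beta> i / (2 * \<Gamma> i) * ((norm (u - x (i - 1)))\<^sup>2 - (norm (u - x i))\<^sup>2)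
        + \<gamma> i * \<eta> i / \<Gamma> i)"
    proof (rule sum.cong[OF refl])
      fix i assume "i \<in> {1..k}"
      hence "\<Gamma> i \<noteq> 0" using \<Gamma>pos[of i] by force
      thus "\<gamma> i / \<Gamma> i * T i u = \<gamma> i / \<Gamma> i * (f (z i) + inner (gradf (z i)) (u - z i))
        + \<gamma> i * \<beta> i / (2 * \<Gamma> i) * ((norm (u - x (i - 1)))\<^sup>2 - (norm (u - x i))\<^sup>2)
        + \<gamma> i * \<eta> i / \<Gamma> i"
        by (simp add: T_def field_simps)
    qed
    also have "\<dots> = (\<Sum>i=1..k. \<gamma> i / \<Gamma> i * (f (z i) + inner (gradf (z i)) (u - z i)))
        + (\<Sum>i=1..k. \<gamma> i * \<beta> i / (2 * \<Gamma> i) * ((norm (u - x (i - 1)))\<^sup>2 - (norm (u - x i))\<^sup>2))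
        + (\<Sum>i=1..k. \<gamma> i * \<eta> i / \<Gamma> i)"
      by (simp add: sum.distrib)
    finally have eq: "\<Gamma> k * (\<Sum>i=1..k. \<gamma> i / \<Gamma> i * T i u) =
        \<Gamma> k * (\<Sum>i=1..k. \<gamma> i / \<Gamma> i * (f (z i) + inner (gradf (z i)) (u - z i)))
        + \<Gamma> k * (\<Sum>i=1..k. \<gamma> i * \<beta> i / (2 * \<Gamma> i) * ((norm (u - x (i - 1)))\<^sup>2 - (norm (u - x i))\<^sup>2))
        + \<Gamma> k * (\<Sum>i=1..k. \<gamma> i * \<eta> i / \<Gamma> i)"
      by (simp add: distrib_left)
    show "f (y k) - \<Gamma> k * (\<Sum>i=1..k. \<gamma> i / \<Gamma> i * (f (z i) + inner (gradf (z i)) (u - z i)))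
     \<le> \<epsilon> / 2
        + \<Gamma> k * (\<Sum>i=1..k. \<gamma> i * \<beta> i / (2 * \<Gamma> i) * ((norm (u - x (i - 1)))\<^sup>2 - (norm (u - x i))\<^sup>2))
        + \<Gamma> k * (\<Sum>i=1..k. \<gamma> i * \<eta> i / \<Gamma> i)"
      using ind[OF u, of n] n eq by simp
  qed
qed

end
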